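(* Let $a$ be a regular scale factor, let $\dot a(0^+)=\lim_{t\to0^+}\dot a(t)$, and fix $\tau>0$. (a) If $\dot a(0^+)=0$ and there exists $\epsilon>0$ such that $\ddot a(t)\ge0$ for $t\in(0,\epsilon)$, then \[ \lim_{t_0\to0^+}\int_{t_0}^{\tau}\frac{\ddot a(t)}{\dot a(t)^2}\frac{dt}{\sqrt{a^2(\tau)-a^2(t)}}=\infty. \] (b) If $\infty>\dot a(0^+)>0$, then the limit \[ \lim_{t_0\to0^+}\int_{t_0}^{\tau}\frac{\ddot a(t)}{\dot a(t)^2}\frac{dt}{\sqrt{a^2(\tau)-a^2(t)}}=\int_{0}^{\tau}\frac{\ddot a(t)}{\dot a(t)^2}\frac{dt}{\sqrt{a^2(\tau)-a^2(t)}} \] exists and is finite.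
   Context: A function $a:[0,\infty)\to[0,\infty)$ is a regular scale factor if: (a) $a(0)=0$; (b) $a$ is increasing and continuous on $[0,\infty)$, twice continuously differentiable on $(0,\infty)$, with an inverse function on $[0,\infty)$; (c) $\frac{a(t)\ddot a(t)}{\dot a(t)^2}\le1$ for all $t>0$ (presupposing $\dot a(t)\ne0$). *)

theory Defs
  imports "HOL-Analysis.Analysis"
begin

definition regular_scale_factor ::
  "(real \<Rightarrow> real) \<Rightarrow> (real \<Rightarrow> real) \<Rightarrow> (real \<Rightarrow> real) \<Rightarrow> bool" where
  "regular_scale_factor a a' a'' \<longleftrightarrow>
     a 0 = 0 \<and>
     (\<forall>t\<ge>0. a t \<ge> 0) \<and>
     strict_mono_on {0..} a \<and>
     continuous_on {0..} a \<and>
     (\<forall>t>0. (a has_real_derivative a' t) (at t)) \<and>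
     (\<forall>t>0. (a' has_real_derivative a'' t) (at t)) \<and>
     continuous_on {0<..} a'' \<and>
     (\<forall>t>0. a' t \<noteq> 0) \<and>
     (\<forall>t>0. a t * a'' t / (a' t)\<^sup>2 \<le> 1)"

definition sf_integrand ::
  "(real \<Rightarrow> real) \<Rightarrow> (real \<Rightarrow> real) \<Rightarrow> (real \<Rightarrow> real) \<Rightarrow> real \<Rightarrow> real \<Rightarrow> real" where
  "sf_integrand a a' a'' \<tau> t = a'' t / (a' t)\<^sup>2 / sqrt ((a \<tau>)\<^sup>2 - (a t)\<^sup>2)"

end

theory Submission
  imports Defs
begin

lemma rsf_D:
  assumes "regular_scale_factor a a' a''"
  shows "a 0 = 0" "\<And>t. t \<ge> 0 \<Longrightarrow> a t \<ge> 0" "strict_mono_on {0..} a" "continuous_on {0..} a"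
    "\<And>t. t > 0 \<Longrightarrow> (a has_real_derivative a' t) (at t)"
    "\<And>t. t > 0 \<Longrightarrow> (a' has_real_derivative a'' t) (at t)"
    "continuous_on {0<..} a''" "\<And>t. t>0 \<Longrightarrow> a' t \<noteq> 0"
  using assms unfolding regular_scale_factor_def by auto

lemma rsf_lt:
  assumes "regular_scale_factor a a' a''" "0 \<le> x" "x < y"
  shows "a x < a y"
  using rsf_D(3)[OF assms(1)] assms(2,3) by (auto intro: strict_mono_onD)

lemma rsf_a'_pos:
  assumes R: "regular_scale_factor a a' a''" and t: "t > 0"
  shows "a' t > 0"
proof (rule ccontr)
  assume "\<not> a' t > 0"
  with rsf_D(8)[OF R t] have "a' t < 0" by auto
  from DERIV_neg_dec_right[OF rsf_D(5)[OF R t] this] obtain d where d: "d > 0"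
    "\<forall>h>0. h < d \<longrightarrow> a t > a (t + h)" by blast
  then have "a t > a (t + d/2)" by auto
  moreover have "a t < a (t + d/2)" using rsf_lt[OF R, of t "t + d/2"] t d by auto
  ultimately show False by auto
qed

lemma rsf_a'_cont:
  assumes R: "regular_scale_factor a a' a''"
  shows "continuous_on {0<..} a'"
  by (metis DERIV_isCont continuous_at_imp_continuous_on greaterThan_iff rsf_D(6)[OF R])

lemma rsf_a_cont:
  assumes R: "regular_scale_factor a a' a''"
  shows "continuous_on {0<..} a"
  by (metis DERIV_isCont continuous_at_imp_continuous_on greaterThan_iff rsf_D(5)[OF R])

lemma rsf_sf_cont:
  assumes R: "regular_scale_factor a a' a''" and S: "S \<subseteq> {0<..<\<tau>}"
  shows "continuous_on S (sf_integrand a a' a'' \<tau>)"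
proof -
  have sub: "S \<subseteq> {0<..}" using S by auto
  have c1: "continuous_on S a''" by (rule continuous_on_subset[OF rsf_D(7)[OF R] sub])
  have c2: "continuous_on S a'" by (rule continuous_on_subset[OF rsf_a'_cont[OF R] sub])
  have c3: "continuous_on S a" by (rule continuous_on_subset[OF rsf_a_cont[OF R] sub])
  have pos: "(a \<tau>)\<^sup>2 - (a t)\<^sup>2 > 0" if "t \<in> S" for t
  proof -
    have "0 \<le> a t" using rsf_D(2)[OF R, of t] that S by auto
    moreover have "a t < a \<tau>" using rsf_lt[OF R, of t \<tau>] that S by auto
    ultimately show ?thesis by (simp add: power_strict_mono)
  qed
  have nz: "a' t \<noteq> 0" if "t \<in> S" for t using rsf_a'_pos[OF R, of t] that S by auto
  have nz2: "sqrt ((a \<tau>)\<^sup>2 - (a t)\<^sup>2) \<noteq> 0" if "t \<in> S" for t using pos[OF that] by auto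
  show ?thesis unfolding sf_integrand_def
    using c1 c2 c3 nz nz2
    by (intro continuous_intros) auto
qed

lemma rsf_abs_int_near_tau:
  assumes R: "regular_scale_factor a a' a''" and s: "0 < s" "s < \<tau>"
  shows "sf_integrand a a' a'' \<tau> absolutely_integrable_on {s..\<tau>}"
proof -
  have sub: "{s..\<tau>} \<subseteq> {0<..}" using s by auto
  have c1: "continuous_on {s..\<tau>} a''" by (rule continuous_on_subset[OF rsf_D(7)[OF R] sub])
  have c2: "continuous_on {s..\<tau>} a'" by (rule continuous_on_subset[OF rsf_a'_cont[OF R] sub])
  have cc: "continuous_on {s..\<tau>} (\<lambda>t. \<bar>a'' t / (a' t)\<^sup>2\<bar>)"
  proof -
    have nz: "a' t \<noteq> 0" if "t \<in> {s..\<tau>}" for t using rsf_a'_pos[OF R, of t] that s by auto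
    show ?thesis using c1 c2 nz by (intro continuous_intros) auto
  qed
  obtain t1 where t1: "t1 \<in> {s..\<tau>}" "\<forall>y\<in>{s..\<tau>}. \<bar>a'' y / (a' y)\<^sup>2\<bar> \<le> \<bar>a'' t1 / (a' t1)\<^sup>2\<bar>"
    using continuous_attains_sup[OF compact_Icc _ cc] s by auto
  define M where "M = \<bar>a'' t1 / (a' t1)\<^sup>2\<bar>"
  have M: "\<bar>a'' y / (a' y)\<^sup>2\<bar> \<le> M" if "y \<in> {s..\<tau>}" for y using t1 that M_def by auto
  have M0: "M \<ge> 0" using M_def by auto
  obtain t2 where t2: "t2 \<in> {s..\<tau>}" "\<forall>y\<in>{s..\<tau>}. a' t2 \<le> a' y"
    using continuous_attains_inf[OF compact_Icc _ c2] s by auto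
  define m where "m = a' t2"
  have m0: "m > 0" using rsf_a'_pos[OF R, of t2] t2 s m_def by auto
  have atau: "a \<tau> > 0" using rsf_lt[OF R, of 0 \<tau>] rsf_D(1)[OF R] s by auto
  define K where "K = sqrt (m * a \<tau>)"
  have K0: "K > 0" using m0 atau K_def by auto
  define g where "g t = M / (K * sqrt (\<tau> - t))" for t
  have mvt: "a \<tau> - a t \<ge> m * (\<tau> - t)" if t: "t \<in> {s..<\<tau>}" for t
  proof -
    have "\<And>x. t \<le> x \<Longrightarrow> x \<le> \<tau> \<Longrightarrow> DERIV a x :> a' x" using rsf_D(5)[OF R] t s by auto
    from MVT2[of t \<tau>, OF _ this] t obtain z where z: "z > t" "z < \<tau>" "a \<tau> - a t = (\<tau> - t) * a' z" by auto
    have "a' z \<ge> m" using t2 z t m_def by auto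
    then show ?thesis using z t by (simp add: mult.commute mult_left_mono)
  qed
  have bound: "norm (sf_integrand a a' a'' \<tau> t) \<le> g t" if t: "t \<in> {s..\<tau>}" for t
  proof (cases "t = \<tau>")
    case True then show ?thesis by (simp add: sf_integrand_def g_def)
  next
    case False
    with t have tl: "t \<in> {s..<\<tau>}" by auto
    have at0: "a t \<ge> 0" using rsf_D(2)[OF R, of t] t s by auto
    have "(a \<tau>)\<^sup>2 - (a t)\<^sup>2 = (a \<tau> - a t) * (a \<tau> + a t)" by (simp add: power2_eq_square algebra_simps)
    also have "\<dots> \<ge> (m * (\<tau> - t)) * a \<tau>"
    proof -
      have "m * (\<tau> - t) \<ge> 0" using m0 tl by auto
      then show ?thesis using mvt[OF tl] at0 m0 tl
        by (intro mult_mono) linarith+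
    qed
    finally have D: "(a \<tau>)\<^sup>2 - (a t)\<^sup>2 \<ge> (m * a \<tau>) * (\<tau> - t)" by (simp add: algebra_simps)
    have "sqrt ((a \<tau>)\<^sup>2 - (a t)\<^sup>2) \<ge> sqrt ((m * a \<tau>) * (\<tau> - t))" using D by (rule real_sqrt_le_mono)
    then have S: "sqrt ((a \<tau>)\<^sup>2 - (a t)\<^sup>2) \<ge> K * sqrt (\<tau> - t)" by (simp add: K_def real_sqrt_mult)
    have KS: "K * sqrt (\<tau> - t) > 0" using K0 tl by auto
    have "norm (sf_integrand a a' a'' \<tau> t) = \<bar>a'' t / (a' t)\<^sup>2\<bar> / sqrt ((a \<tau>)\<^sup>2 - (a t)\<^sup>2)"
    proof -
      have "sqrt ((a \<tau>)\<^sup>2 - (a t)\<^sup>2) > 0" using S KS by linarith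
      then show ?thesis by (simp add: sf_integrand_def abs_divide abs_mult)
    qed
    also have "\<dots> \<le> M / (K * sqrt (\<tau> - t))"
      using M[OF t] S KS M0 by (intro frac_le) auto
    finally show ?thesis by (simp add: g_def)
  qed
  have gint: "g integrable_on {s..\<tau>}"
  proof -
    have "(g has_integral ((\<lambda>t. -2 * M / K * sqrt (\<tau> - t)) \<tau> - (\<lambda>t. -2 * M / K * sqrt (\<tau> - t)) s)) {s..\<tau>}"
    proof (rule fundamental_theorem_of_calculus_interior_strong[where S="{}"])
      show "continuous_on {s..\<tau>} (\<lambda>t. -2 * M / K * sqrt (\<tau> - t))" by (intro continuous_intros)
      fix x assume x: "x \<in> {s<..<\<tau>} - {}"
      have "((\<lambda>t. -2 * M / K * sqrt (\<tau> - t)) has_real_derivative (-2 * M / K * (inverse (sqrt (\<tau> - x)) / 2 * (0 - 1)))) (at x)"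
      proof -
        have d1: "((\<lambda>t. \<tau> - t) has_real_derivative (0 - 1)) (at x)" by (intro derivative_eq_intros) auto
        have d2: "(sqrt has_real_derivative inverse (sqrt (\<tau> - x)) / 2) (at (\<tau> - x))"
          using x by (intro DERIV_real_sqrt) auto
        show ?thesis using DERIV_cmult[OF DERIV_chain2[OF d2 d1], of "-2 * M / K"] by simp
      qed
      moreover have "-2 * M / K * (inverse (sqrt (\<tau> - x)) / 2 * (0 - 1)) = g x"
        using K0 by (simp add: g_def field_simps)
      ultimately show "((\<lambda>t. -2 * M / K * sqrt (\<tau> - t)) has_vector_derivative g x) (at x)"
        by (simp add: has_real_derivative_iff_has_vector_derivative)
    qed (use s in auto)
    then show ?thesis by blast
  qed
  have neg: "negligible (({s..\<tau>} - {s..<\<tau>}) \<union> ({s..<\<tau>} - {s..\<tau>}))"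
  proof -
    have "({s..\<tau>} - {s..<\<tau>}) \<union> ({s..<\<tau>} - {s..\<tau>}) \<subseteq> {\<tau>}" by auto
    then show ?thesis using negligible_subset negligible_sing by blast
  qed
  have neg2: "negligible (({s..<\<tau>} - {s..\<tau>}) \<union> ({s..\<tau>} - {s..<\<tau>}))"
    using neg by (simp add: Un_commute)
  have ng: "negligible {x \<in> A - B. f x \<noteq> 0}" if "A - B \<subseteq> {\<tau>}" for A B and f :: "real \<Rightarrow> real"
    using that by (metis (no_types, lifting) mem_Collect_eq negligible_sing negligible_subset subset_eq)
  have gint2: "g integrable_on {s..<\<tau>}" by (rule integrable_spike_set[OF gint ng ng]) auto
  have cont: "continuous_on {s..<\<tau>} (sf_integrand a a' a'' \<tau>)"
    using s by (intro rsf_sf_cont[OF R]) auto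
  have ai: "sf_integrand a a' a'' \<tau> absolutely_integrable_on {s..<\<tau>}"
    by (rule measurable_bounded_by_integrable_imp_absolutely_integrable[OF
          continuous_imp_measurable_on_sets_lebesgue[OF cont] _ gint2]) (use bound in auto)
  then have "sf_integrand a a' a'' \<tau> integrable_on {s..<\<tau>}"
    using set_lebesgue_integral_eq_integral(1) by blast
  then have fint: "sf_integrand a a' a'' \<tau> integrable_on {s..\<tau>}" by (rule integrable_spike_set[OF _ ng ng]) auto
  show ?thesis by (rule absolutely_integrable_integrable_bound[OF bound fint gint])
qed

lemma rsf_deriv_inv:
  assumes R: "regular_scale_factor a a' a''" and x: "x > 0"
  shows "((\<lambda>t. - inverse (a' t)) has_real_derivative a'' x / (a' x)\<^sup>2) (at x)"
proof -
  have "((\<lambda>t. - inverse (a' t)) has_real_derivative - (- (a'' x * inverse (a' x ^ Suc (Suc 0))))) (at x)"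
    by (intro DERIV_minus DERIV_inverse_fun rsf_D(6)[OF R x] rsf_D(8)[OF R x])
  then show ?thesis by (simp add: divide_inverse power2_eq_square)
qed

lemma rsf_ftc:
  assumes R: "regular_scale_factor a a' a''" and xy: "0 < x" "x \<le> y"
  shows "((\<lambda>t. a'' t / (a' t)\<^sup>2) has_integral (inverse (a' x) - inverse (a' y))) {x..y}"
proof -
  have "((\<lambda>t. a'' t / (a' t)\<^sup>2) has_integral ((\<lambda>t. - inverse (a' t)) y - (\<lambda>t. - inverse (a' t)) x)) {x..y}"
  proof (rule fundamental_theorem_of_calculus[OF xy(2)])
    fix t assume t: "t \<in> {x..y}"
    then have "t > 0" using xy by auto
    from rsf_deriv_inv[OF R this] show "((\<lambda>t. - inverse (a' t)) has_vector_derivative a'' t / (a' t)\<^sup>2) (at t within {x..y})"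
      by (simp add: has_real_derivative_iff_has_vector_derivative has_vector_derivative_at_within)
  qed
  then show ?thesis by simp
qed

lemma rsf_part_a:
  assumes R: "regular_scale_factor a a' a''" and tau: "\<tau> > 0"
    and lim: "(a' \<longlongrightarrow> 0) (at_right 0)" and eps: "\<epsilon> > 0" and pos: "\<forall>t\<in>{0<..<\<epsilon>}. a'' t \<ge> 0"
  shows "filterlim (\<lambda>t0. integral {t0..\<tau>} (sf_integrand a a' a'' \<tau>)) at_top (at_right 0)"
proof -
  define e where "e = min (\<epsilon>/2) (\<tau>/2)"
  have e: "0 < e" "e < \<epsilon>" "e < \<tau>" using eps tau by (auto simp: e_def)
  define C where "C = integral {e..\<tau>} (sf_integrand a a' a'' \<tau>)"
  have atau: "a \<tau> > 0" using rsf_lt[OF R, of 0 \<tau>] rsf_D(1)[OF R] tau by auto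
  have ev: "eventually (\<lambda>t0. inverse (a \<tau>) * inverse (a' t0) + (C - inverse (a' e) * inverse (a \<tau>))
      \<le> integral {t0..\<tau>} (sf_integrand a a' a'' \<tau>)) (at_right 0)"
    unfolding eventually_at_right_field
  proof (intro exI[of _ e] conjI allI impI)
    fix t0 :: real assume t0: "t0 > 0" "t0 < e"
    have "sf_integrand a a' a'' \<tau> absolutely_integrable_on {t0..\<tau>}"
      using rsf_abs_int_near_tau[OF R, of t0 \<tau>] t0 e by auto
    then have int: "sf_integrand a a' a'' \<tau> integrable_on {t0..\<tau>}"
      using set_lebesgue_integral_eq_integral(1) by blast
    have split: "integral {t0..\<tau>} (sf_integrand a a' a'' \<tau>) = integral {t0..e} (sf_integrand a a' a'' \<tau>) + C"
      unfolding C_def using Henstock_Kurzweil_Integration.integral_combine[OF _ _ int, of e] t0 e by auto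
    have I1: "((\<lambda>t. a'' t / (a' t)\<^sup>2 * inverse (a \<tau>)) has_integral ((inverse (a' t0) - inverse (a' e)) * inverse (a \<tau>))) {t0..e}"
      by (rule has_integral_mult_left[OF rsf_ftc[OF R]]) (use t0 in auto)
    have int2: "sf_integrand a a' a'' \<tau> integrable_on {t0..e}"
      by (rule integrable_continuous_interval, rule rsf_sf_cont[OF R]) (use t0 e in auto)
    have le: "a'' t / (a' t)\<^sup>2 * inverse (a \<tau>) \<le> sf_integrand a a' a'' \<tau> t" if t: "t \<in> {t0..e}" for t
    proof -
      have c0: "a'' t / (a' t)\<^sup>2 \<ge> 0" using pos t t0 e by auto
      have at0: "0 \<le> a t" using rsf_D(2)[OF R, of t] t t0 by auto
      have "a t < a \<tau>" using rsf_lt[OF R, of t \<tau>] t t0 e by auto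
      then have D: "(a \<tau>)\<^sup>2 - (a t)\<^sup>2 > 0" using at0 by (simp add: power_strict_mono)
      have "sqrt ((a \<tau>)\<^sup>2 - (a t)\<^sup>2) \<le> sqrt ((a \<tau>)\<^sup>2)" using at0 by (intro real_sqrt_le_mono) auto
      then have S: "sqrt ((a \<tau>)\<^sup>2 - (a t)\<^sup>2) \<le> a \<tau>" using atau by simp
      have "inverse (a \<tau>) \<le> inverse (sqrt ((a \<tau>)\<^sup>2 - (a t)\<^sup>2))"
        using S D by (intro le_imp_inverse_le) auto
      then have "a'' t / (a' t)\<^sup>2 * inverse (a \<tau>) \<le> a'' t / (a' t)\<^sup>2 * inverse (sqrt ((a \<tau>)\<^sup>2 - (a t)\<^sup>2))"
        using c0 by (intro mult_left_mono) auto
      then show ?thesis by (simp add: sf_integrand_def divide_inverse)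
    qed
    have "(inverse (a' t0) - inverse (a' e)) * inverse (a \<tau>) \<le> integral {t0..e} (sf_integrand a a' a'' \<tau>)"
      using has_integral_integral integral_le[OF has_integral_integrable[OF I1] int2 le] integral_unique[OF I1] by auto
    then show "inverse (a \<tau>) * inverse (a' t0) + (C - inverse (a' e) * inverse (a \<tau>))
      \<le> integral {t0..\<tau>} (sf_integrand a a' a'' \<tau>)" using split by (simp add: algebra_simps)
  qed (use e in auto)
  have evpos: "eventually (\<lambda>t. 0 < a' t) (at_right 0)"
    unfolding eventually_at_right_field by (intro exI[of _ 1]) (auto intro: rsf_a'_pos[OF R])
  have "LIM t0 (at_right 0). inverse (a' t0) :> at_top" by (rule filterlim_inverse_at_top[OF lim evpos])
  then have "LIM t0 (at_right 0). inverse (a \<tau>) * inverse (a' t0) :> at_top"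
    using atau by (intro filterlim_tendsto_pos_mult_at_top[OF tendsto_const]) auto
  then have "LIM t0 (at_right 0). (C - inverse (a' e) * inverse (a \<tau>)) + inverse (a \<tau>) * inverse (a' t0) :> at_top"
    by (intro filterlim_tendsto_add_at_top[OF tendsto_const])
  then have "LIM t0 (at_right 0). inverse (a \<tau>) * inverse (a' t0) + (C - inverse (a' e) * inverse (a \<tau>)) :> at_top"
    by (simp add: add.commute)
  from filterlim_at_top_mono[OF this ev] show ?thesis .
qed

lemma rsf_G_deriv:
  assumes R: "regular_scale_factor a a' a''" and x: "0 < x" "x < \<tau>"
  shows "((\<lambda>t. inverse (sqrt ((a \<tau>)\<^sup>2 - (a t)\<^sup>2))) has_real_derivative
     a x * a' x * inverse (((a \<tau>)\<^sup>2 - (a x)\<^sup>2) * sqrt ((a \<tau>)\<^sup>2 - (a x)\<^sup>2))) (at x)"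
proof -
  define D where "D = (a \<tau>)\<^sup>2 - (a x)\<^sup>2"
  have at0: "0 \<le> a x" using rsf_D(2)[OF R, of x] x by auto
  have "a x < a \<tau>" using rsf_lt[OF R, of x \<tau>] x by auto
  then have D0: "D > 0" using at0 by (simp add: power_strict_mono D_def)
  have dD: "((\<lambda>t. (a \<tau>)\<^sup>2 - (a t)\<^sup>2) has_real_derivative (0 - 2 * a x * a' x)) (at x)"
    using rsf_D(5)[OF R x(1)] by (auto intro!: derivative_eq_intros)
  have d2: "(sqrt has_real_derivative inverse (sqrt D) / 2) (at ((a \<tau>)\<^sup>2 - (a x)\<^sup>2))"
    using D0 unfolding D_def by (intro DERIV_real_sqrt) auto
  have d3: "((\<lambda>t. sqrt ((a \<tau>)\<^sup>2 - (a t)\<^sup>2)) has_real_derivative (inverse (sqrt D) / 2 * (0 - 2 * a x * a' x))) (at x)"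
    using DERIV_chain2[OF d2 dD] .
  note d4 = DERIV_inverse_fun[OF d3]
  have "sqrt ((a \<tau>)\<^sup>2 - (a x)\<^sup>2) \<noteq> 0" using D0 D_def by auto
  note X = d4[OF this]
  have eq: "- (inverse (sqrt D) / 2 * (0 - 2 * a x * a' x) * inverse (sqrt D ^ Suc (Suc 0)))
     = a x * a' x * inverse (D * sqrt D)"
    using D0 by (simp add: field_simps power2_eq_square)
  have eq': "- (inverse (sqrt ((a \<tau>)\<^sup>2 - (a x)\<^sup>2)) / 2 * (0 - 2 * a x * a' x) * inverse (sqrt ((a \<tau>)\<^sup>2 - (a x)\<^sup>2) ^ Suc (Suc 0)))
     = a x * a' x * inverse (((a \<tau>)\<^sup>2 - (a x)\<^sup>2) * sqrt ((a \<tau>)\<^sup>2 - (a x)\<^sup>2))"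
    using eq unfolding D_def .
  show ?thesis using X unfolding D_def eq' .
qed

lemma rsf_part_b_int0:
  assumes R: "regular_scale_factor a a' a''" and tau: "\<tau> > 0"
    and L: "L > 0" and lim: "(a' \<longlongrightarrow> L) (at_right 0)"
  shows "sf_integrand a a' a'' \<tau> integrable_on {0..\<tau>/2}"
proof -
  define c where "c = \<tau>/2"
  have c: "0 < c" "c < \<tau>" using tau c_def by auto
  define A1 where "A1 t = (if t = 0 then L else a' t)" for t
  define Dd where "Dd t = (a \<tau>)\<^sup>2 - (a t)\<^sup>2" for t
  define G where "G t = inverse (sqrt (Dd t))" for t
  define Gd where "Gd t = a t * A1 t * inverse (Dd t * sqrt (Dd t))" for t
  define F0 where "F0 t = - inverse (A1 t)" for t
  define P where "P t = F0 t * G t" for t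
  define P' where "P' t = a'' t/(a' t)\<^sup>2 * G t + (- inverse (a' t)) * (a t * a' t * inverse (Dd t * sqrt (Dd t)))" for t
  have Dpos: "Dd t > 0" if "t \<in> {0..c}" for t
  proof -
    have "0 \<le> a t" using rsf_D(2)[OF R, of t] that by auto
    moreover have "a t < a \<tau>" using rsf_lt[OF R, of t \<tau>] that c by auto
    ultimately show ?thesis by (simp add: power_strict_mono Dd_def)
  qed
  have A1pos: "A1 t > 0" if "t \<in> {0..c}" for t
    using that L rsf_a'_pos[OF R, of t] by (auto simp: A1_def)
  have contA1: "continuous_on {0..c} A1"
  proof (rule continuous_on_eq_continuous_within[THEN iffD2], intro ballI)
    fix x assume x: "x \<in> {0..c}"
    show "continuous (at x within {0..c}) A1"
    proof (cases "x = 0")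
      case True
      have ev: "eventually (\<lambda>t. a' t = A1 t) (at_right 0)"
        unfolding eventually_at_right_field by (intro exI[of _ 1]) (auto simp: A1_def)
      have "(A1 \<longlongrightarrow> L) (at_right 0)" using tendsto_cong[OF ev] lim by simp
      then show ?thesis using True c
        by (simp add: continuous_within at_within_Icc_at_right A1_def)
    next
      case False
      then have x0: "x > 0" using x by auto
      have "isCont a' x" using DERIV_isCont[OF rsf_D(6)[OF R x0]] .
      moreover have "eventually (\<lambda>t. a' t = A1 t) (nhds x)"
      proof -
        have "eventually (\<lambda>t. t \<in> {0<..}) (nhds x)" using eventually_nhds_in_open[of "{0<..}" x] x0 by auto
        then show ?thesis by (rule eventually_mono) (auto simp: A1_def)
      qed
      ultimately have "isCont A1 x" using isCont_cong by blast
      then show ?thesis by (rule continuous_at_imp_continuous_at_within)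
    qed
  qed
  have conta: "continuous_on {0..c} a"
    by (rule continuous_on_subset[OF rsf_D(4)[OF R]]) auto
  have nz1: "A1 t \<noteq> 0" if "t \<in> {0..c}" for t using A1pos[OF that] by auto
  have nz2: "sqrt (Dd t) \<noteq> 0" if "t \<in> {0..c}" for t using Dpos[OF that] by auto
  have nz3: "Dd t * sqrt (Dd t) \<noteq> 0" if "t \<in> {0..c}" for t using Dpos[OF that] by auto
  have contP: "continuous_on {0..c} P"
    unfolding P_def F0_def G_def Dd_def
    using contA1 conta nz1 nz2[unfolded Dd_def] by (intro continuous_intros) auto
  have contFG: "continuous_on {0..c} (\<lambda>t. F0 t * Gd t)"
    unfolding Gd_def F0_def
    using contA1 conta nz1 nz3[unfolded Dd_def] unfolding Dd_def by (intro continuous_intros) auto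
  have derP: "(P has_vector_derivative P' x) (at x)" if x: "x \<in> {0<..<c} - {}" for x
  proof -
    have x0: "0 < x" "x < \<tau>" using x c by auto
    have "((\<lambda>t. - inverse (a' t) * G t) has_real_derivative
        (a'' x/(a' x)\<^sup>2 * G x + (- inverse (a' x)) * (a x * a' x * inverse (Dd x * sqrt (Dd x))))) (at x)"
      using DERIV_mult[OF rsf_deriv_inv[OF R x0(1)] rsf_G_deriv[OF R x0]]
      by (simp add: G_def Dd_def mult.commute)
    then have "(P has_real_derivative P' x) (at x)"
      unfolding P'_def
      by (rule has_field_derivative_transform_within_open[of _ _ _ "{0<..}"])
         (use x0 in \<open>auto simp: P_def F0_def A1_def\<close>)
    then show ?thesis by (simp add: has_real_derivative_iff_has_vector_derivative)
  qed
  have "(P' has_integral (P c - P 0)) {0..c}"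
    by (rule fundamental_theorem_of_calculus_interior_strong[OF _ _ derP contP]) (use c in auto)
  then have i1: "P' integrable_on {0..c}" by blast
  have i2: "(\<lambda>t. F0 t * Gd t) integrable_on {0..c}" by (rule integrable_continuous_interval[OF contFG])
  have i3: "(\<lambda>t. P' t - F0 t * Gd t) integrable_on {0..c}" by (rule integrable_diff[OF i1 i2])
  have "sf_integrand a a' a'' \<tau> integrable_on {0..c}"
  proof (rule integrable_spike[OF i3, of "{0}"])
    fix t assume t: "t \<in> {0..c} - {0}"
    then have t0: "t > 0" by auto
    have "a' t \<noteq> 0" using rsf_a'_pos[OF R t0] by auto
    then show "sf_integrand a a' a'' \<tau> t = P' t - F0 t * Gd t"
      using t0 by (simp add: sf_integrand_def P'_def F0_def Gd_def A1_def G_def Dd_def divide_inverse)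
  qed auto
  then show ?thesis by (simp add: c_def)
qed

theorem lemma5p6:
  fixes a a' a'' :: "real \<Rightarrow> real" and \<tau> :: real
  assumes "regular_scale_factor a a' a''"
    and "\<tau> > 0"
  shows
    "((a' \<longlongrightarrow> 0) (at_right 0) \<and> (\<exists>\<epsilon>>0. \<forall>t\<in>{0<..<\<epsilon>}. a'' t \<ge> 0)
        \<longrightarrow> (\<forall>t0\<in>{0<..<\<tau>}. sf_integrand a a' a'' \<tau> absolutely_integrable_on {t0..\<tau>})
          \<and> filterlim (\<lambda>t0. integral {t0..\<tau>} (sf_integrand a a' a'' \<tau>)) at_top (at_right 0))
   \<and> ((\<exists>L>0. (a' \<longlongrightarrow> L) (at_right 0))
        \<longrightarrow> sf_integrand a a' a'' \<tau> integrable_on {0..\<tau>}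
          \<and> ((\<lambda>t0. integral {t0..\<tau>} (sf_integrand a a' a'' \<tau>))
               \<longlongrightarrow> integral {0..\<tau>} (sf_integrand a a' a'' \<tau>)) (at_right 0))"
proof (intro conjI impI)
  note R = assms(1) and tau = assms(2)
  show "\<forall>t0\<in>{0<..<\<tau>}. sf_integrand a a' a'' \<tau> absolutely_integrable_on {t0..\<tau>}"
    using rsf_abs_int_near_tau[OF R] by auto
  {
    assume h: "(a' \<longlongrightarrow> 0) (at_right 0) \<and> (\<exists>\<epsilon>>0. \<forall>t\<in>{0<..<\<epsilon>}. a'' t \<ge> 0)"
    then obtain \<epsilon> where "\<epsilon> > 0" "\<forall>t\<in>{0<..<\<epsilon>}. a'' t \<ge> 0" by auto
    then show "filterlim (\<lambda>t0. integral {t0..\<tau>} (sf_integrand a a' a'' \<tau>)) at_top (at_right 0)"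
      using rsf_part_a[OF R tau] h by blast
  }
  {
    assume "\<exists>L>0. (a' \<longlongrightarrow> L) (at_right 0)"
    then obtain L where L: "L > 0" "(a' \<longlongrightarrow> L) (at_right 0)" by auto
    have i1: "sf_integrand a a' a'' \<tau> integrable_on {0..\<tau>/2}" by (rule rsf_part_b_int0[OF R tau L])
    have "sf_integrand a a' a'' \<tau> absolutely_integrable_on {\<tau>/2..\<tau>}"
      using rsf_abs_int_near_tau[OF R, of "\<tau>/2" \<tau>] tau by auto
    then have i2: "sf_integrand a a' a'' \<tau> integrable_on {\<tau>/2..\<tau>}"
      using set_lebesgue_integral_eq_integral(1) by blast
    show int: "sf_integrand a a' a'' \<tau> integrable_on {0..\<tau>}"
      by (rule Henstock_Kurzweil_Integration.integrable_combine[OF _ _ i1 i2]) (use tau in auto)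
    have "continuous_on {0..\<tau>} (\<lambda>x. integral {x..\<tau>} (sf_integrand a a' a'' \<tau>))"
      by (rule indefinite_integral_continuous_1'[OF int])
    then have "((\<lambda>x. integral {x..\<tau>} (sf_integrand a a' a'' \<tau>)) \<longlongrightarrow> integral {0..\<tau>} (sf_integrand a a' a'' \<tau>))
       (at 0 within {0..\<tau>})"
      using tau unfolding continuous_on_def by auto
    then show "((\<lambda>t0. integral {t0..\<tau>} (sf_integrand a a' a'' \<tau>))
               \<longlongrightarrow> integral {0..\<tau>} (sf_integrand a a' a'' \<tau>)) (at_right 0)"
      using at_within_Icc_at_right[OF tau] by simp
  }
qed

end
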